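(* Let $A_1=\begin{pmatrix}1&1&2\\1&0&1\\2&1&0\end{pmatrix}$, $a=\begin{pmatrix}2\\2\\1\end{pmatrix}$, let $k\ge1$, let $v\in\mathbb R^k$ be entrywise nonnegative with $v^Tv=1$, and define $$A(v)=\begin{pmatrix}A_1&av^T\\ va^T& vv^T\end{pmatrix}\in\mathbb R^{(k+3)\times(k+3)}.$$ Then $\operatorname{rk}(A(v))=\operatorname{rk}_+(A(v))=3$ and $\operatorname{st}_+(A(v))=4$.
   Context: The SNT-rank $\operatorname{st}_+(A)$ of a symmetric entrywise nonnegative $n\times n$ matrix $A$ is the minimal $k$ such that $A=BCB^T$ with $B$ an entrywise nonnegative $n\times k$ matrix and $C$ a symmetric entrywise nonnegative $k\times k$ matrix. $\operatorname{rk}_+(A)$ is the minimal $k$ such that $A=UV^T$ with $U,V$ entrywise nonnegative $n\times k$ matrices. *)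

theory Defs
  imports "Jordan_Normal_Form.DL_Rank"
begin

definition nonneg_mat :: "real mat \<Rightarrow> bool" where
  "nonneg_mat M \<longleftrightarrow> (\<forall>i<dim_row M. \<forall>j<dim_col M. M $$ (i,j) \<ge> 0)"

definition mat_rank :: "real mat \<Rightarrow> nat" where
  "mat_rank M = vec_space.rank (dim_row M) M"

definition nonneg_rank :: "real mat \<Rightarrow> nat" where
  "nonneg_rank A = (LEAST k. \<exists>U V. U \<in> carrier_mat (dim_row A) k \<and> V \<in> carrier_mat (dim_row A) k
      \<and> nonneg_mat U \<and> nonneg_mat V \<and> A = U * transpose_mat V)"

definition snt_rank :: "real mat \<Rightarrow> nat" where
  "snt_rank A = (LEAST k. \<exists>B C. B \<in> carrier_mat (dim_row A) k \<and> C \<in> carrier_mat k k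
      \<and> transpose_mat C = C \<and> nonneg_mat B \<and> nonneg_mat C \<and> A = B * C * transpose_mat B)"

definition outer :: "real vec \<Rightarrow> real vec \<Rightarrow> real mat" where
  "outer x y = mat (dim_vec x) (dim_vec y) (\<lambda>(i,j). x $ i * y $ j)"

definition A1 :: "real mat" where
  "A1 = mat_of_rows_list 3 [[1,1,2],[1,0,1],[2,1,0]]"

definition avec :: "real vec" where
  "avec = vec_of_list [2,2,1]"

definition Av :: "real vec \<Rightarrow> real mat" where
  "Av v = four_block_mat A1 (outer avec v) (outer v avec) (outer v v)"

end

theory Submission
  imports Defs "Jordan_Normal_Form.DL_Rank_Submatrix"
begin
lemma sum3: "(\<Sum>l<(3::nat). f l) = f 0 + f 1 + (f 2::real)"
  by (simp add: eval_nat_numeral)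
lemma sum3': "(\<Sum>l\<in>{0..<(3::nat)}. f l) = f 0 + f 1 + (f 2::real)"
  by (simp add: atLeast0LessThan eval_nat_numeral)
lemma A1_carrier: "A1 \<in> carrier_mat 3 3" unfolding A1_def mat_of_rows_list_def carrier_mat_def by (simp add: eval_nat_numeral)
lemma A1_idx: "i < 3 \<Longrightarrow> j < 3 \<Longrightarrow> A1 $$ (i,j) = [[1,1,2],[1,0,1],[2,1,(0::real)]] ! i ! j"
  unfolding A1_def mat_of_rows_list_def by (subst index_mat) auto
lemma avec_idx: "i < 3 \<Longrightarrow> avec $ i = [2,2,(1::real)] ! i" "dim_vec avec = 3"
  unfolding avec_def by (simp_all only: vec_of_list_index dim_vec_of_list) simp
lemma Av_dims: "dim_row (Av v) = 3 + dim_vec v" "dim_col (Av v) = 3 + dim_vec v"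
  unfolding Av_def outer_def using A1_carrier avec_idx(2) by auto
lemma Av_idx: "i < 3 + dim_vec v \<Longrightarrow> j < 3 + dim_vec v \<Longrightarrow> Av v $$ (i,j) =
  (if i < 3 then (if j < 3 then A1 $$ (i,j) else avec $ i * v $ (j-3)) else
   (if j < 3 then v $ (i-3) * avec $ j else v $ (i-3) * v $ (j - 3)))"
  unfolding Av_def outer_def using A1_carrier avec_idx(2) by (simp add: index_mat_four_block)
lemma less3: "(i::nat) < 3 \<longleftrightarrow> i = 0 \<or> i = 1 \<or> i = 2" by auto

lemma A1_det: "det A1 \<noteq> 0"
proof
  assume "det A1 = 0"
  then obtain x where x: "x \<in> carrier_vec 3" "x \<noteq> 0\<^sub>v 3" "A1 *\<^sub>v x = 0\<^sub>v 3"
    using det_0_iff_vec_prod_zero_field[OF A1_carrier] by blast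
  have e: "A1 $$ (i,0) * x $ 0 + A1 $$ (i,1) * x $ 1 + A1 $$ (i,2) * x $ 2 = 0" if "i < 3" for i
  proof -
    have "(A1 *\<^sub>v x) $ i = (\<Sum>j\<in>{0..<3}. A1 $$ (i,j) * x $ j)" 
      using x(1) that A1_carrier by (simp add: scalar_prod_def)
    moreover have "(A1 *\<^sub>v x) $ i = 0" using x(3) that by simp
    ultimately show ?thesis unfolding sum3' by simp
  qed
  have "x $ 0 + x $ 1 + 2 * x $ 2 = 0" using e[of 0] by (simp add: A1_idx)
  moreover have "x $ 0 + x $ 2 = 0" using e[of 1] by (simp add: A1_idx)
  moreover have "2 * x $ 0 + x $ 1 = 0" using e[of 2] by (simp add: A1_idx)
  ultimately have "x $ 0 = 0" "x $ 1 = 0" "x $ 2 = 0" by linarith+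
  hence "x = 0\<^sub>v 3" using x(1) by (intro eq_vecI) (auto simp: less3)
  thus False using x by simp
qed

lemma BCBt_idx:
  assumes B: "B \<in> carrier_mat r m" and C: "C \<in> carrier_mat m m" and i: "i < r" and j: "j < r"
  shows "(B * C * transpose_mat B) $$ (i,j) = (\<Sum>p<m. \<Sum>q<m. B $$ (i,p) * C $$ (p,q) * B $$ (j,q))"
proof -
  have "(B * C * transpose_mat B) $$ (i,j) = (\<Sum>p<m. B $$ (i,p) * (\<Sum>q<m. C $$ (p,q) * B $$ (j,q)))"
    using B C i j by (simp add: scalar_prod_def atLeast0LessThan)
  also have "\<dots> = (\<Sum>p<m. \<Sum>q<m. B $$ (i,p) * C $$ (p,q) * B $$ (j,q))"
    by (simp add: sum_distrib_left mult.assoc)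
  finally show ?thesis .
qed

lemma UVt_idx:
  assumes U: "U \<in> carrier_mat r m" and V: "V \<in> carrier_mat r m" and i: "i < r" and j: "j < r"
  shows "(U * transpose_mat V) $$ (i,j) = (\<Sum>l<m. U $$ (i,l) * V $$ (j,l))"
  using U V i j by (simp add: scalar_prod_def atLeast0LessThan)

lemma no_small:
  assumes U: "U \<in> carrier_mat (3 + k) m" and V: "V \<in> carrier_mat (3 + k) m" and m: "m < 3"
    and A: "Av v = U * transpose_mat V" and dv: "dim_vec v = k"
  shows False
proof -
  define U' where "U' = mat 3 3 (\<lambda>(i,l). if l < m then U $$ (i,l) else 0)"
  define V' where "V' = mat 3 3 (\<lambda>(i,l). if l < m then V $$ (i,l) else 0)"
  have U'c: "U' \<in> carrier_mat 3 3" and V'c: "V' \<in> carrier_mat 3 3" unfolding U'_def V'_def by auto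
  have "A1 = U' * transpose_mat V'"
  proof (rule eq_matI)
    fix i j assume i: "i < dim_row (U' * transpose_mat V')" and j: "j < dim_col (U' * transpose_mat V')"
    hence i3: "i < 3" and j3: "j < 3" unfolding U'_def V'_def by auto
    have "(U' * transpose_mat V') $$ (i,j) = (\<Sum>l<3. U' $$ (i,l) * V' $$ (j,l))"
      using UVt_idx[OF U'c V'c i3 j3] .
    also have "\<dots> = (\<Sum>l<3. if l < m then U $$ (i,l) * V $$ (j,l) else 0)"
      using i3 j3 unfolding U'_def V'_def by (intro sum.cong) auto
    also have "\<dots> = (\<Sum>l<m. U $$ (i,l) * V $$ (j,l))"
    proof -
      have "{..<3} \<inter> {l. l < m} = {..<m}" using m by auto
      thus ?thesis by (simp add: sum.If_cases)
    qed
    also have "\<dots> = Av v $$ (i,j)" using UVt_idx[OF U V, of i j] A i3 j3 by simp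
    also have "\<dots> = A1 $$ (i,j)" using Av_idx[of i v j] i3 j3 dv by simp
    finally show "A1 $$ (i,j) = (U' * transpose_mat V') $$ (i,j)" by simp
  qed (insert A1_carrier U'c V'c, auto)
  hence "det A1 = det U' * det (transpose_mat V')"
    using det_mult[OF U'c, of "transpose_mat V'"] V'c by simp
  moreover have "det U' = 0"
  proof -
    have "U' *\<^sub>v unit_vec 3 2 = 0\<^sub>v 3"
      using m unfolding U'_def by (intro eq_vecI) (auto simp: scalar_prod_def sum3' unit_vec_def)
    moreover have "unit_vec 3 2 \<noteq> (0\<^sub>v 3 :: real vec)"
    proof
      assume "unit_vec 3 2 = (0\<^sub>v 3 :: real vec)"
      hence "unit_vec 3 2 $ 2 = (0\<^sub>v 3 :: real vec) $ 2" by simp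
      thus False by simp
    qed
    ultimately show ?thesis using det_0_iff_vec_prod_zero_field[OF U'c] unit_vec_carrier[of 3 2] by blast
  qed
  ultimately show False using A1_det by simp
qed
definition U0 :: "real vec \<Rightarrow> real mat" where
  "U0 v = mat (3 + dim_vec v) 3 (\<lambda>(i,l). if i < 3 then [[0,2,1],[1,1,0],[1,0,1]] ! i ! l else v $ (i-3) * [0,1,2] ! l)"
definition V0 :: "real vec \<Rightarrow> real mat" where
  "V0 v = mat (3 + dim_vec v) 3 (\<lambda>(i,l). if i < 3 then [[1,0,1],[0,0,1],[0,1,0]] ! i ! l else v $ (i-3) * [1,1,0] ! l)"

lemma U0_carrier: "U0 v \<in> carrier_mat (3 + dim_vec v) 3" unfolding U0_def by auto
lemma V0_carrier: "V0 v \<in> carrier_mat (3 + dim_vec v) 3" unfolding V0_def by auto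

lemma Av_UV: "Av v = U0 v * transpose_mat (V0 v)"
proof (rule eq_matI)
  fix i j assume i: "i < dim_row (U0 v * transpose_mat (V0 v))" and j: "j < dim_col (U0 v * transpose_mat (V0 v))"
  hence i': "i < 3 + dim_vec v" and j': "j < 3 + dim_vec v" unfolding U0_def V0_def by auto
  have "(U0 v * transpose_mat (V0 v)) $$ (i,j) = (\<Sum>l<3. U0 v $$ (i,l) * V0 v $$ (j,l))"
    using UVt_idx[OF U0_carrier V0_carrier i' j'] .
  also have "\<dots> = Av v $$ (i,j)"
    unfolding sum3 Av_idx[OF i' j'] using i' j' 
    by (cases "i < 3"; cases "j < 3") (auto simp: U0_def V0_def less3 A1_idx avec_idx)
  finally show "Av v $$ (i,j) = (U0 v * transpose_mat (V0 v)) $$ (i,j)" by simp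
qed (auto simp: Av_dims U0_def V0_def)

lemma U0_nonneg: "\<forall>i<dim_vec v. v $ i \<ge> 0 \<Longrightarrow> nonneg_mat (U0 v)"
  unfolding nonneg_mat_def U0_def by (auto simp: less3)
lemma V0_nonneg: "\<forall>i<dim_vec v. v $ i \<ge> 0 \<Longrightarrow> nonneg_mat (V0 v)"
  unfolding nonneg_mat_def V0_def by (auto simp: less3)
lemma Av_carrier: "Av v \<in> carrier_mat (3 + dim_vec v) (3 + dim_vec v)" by (intro carrier_matI) (simp_all only: Av_dims)
lemma rank_Av: "mat_rank (Av v) = 3"
proof -
  define n where "n = 3 + dim_vec v"
  have Ac: "Av v \<in> carrier_mat n n" unfolding n_def by (rule Av_carrier)
  define R where "R l = mat n n (\<lambda>(i,j). U0 v $$ (i,l) * V0 v $$ (j,l))" for l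
  have Rc: "R l \<in> carrier_mat n n" for l unfolding R_def by auto
  have R1: "vec_space.rank n (R l) \<le> 1" for l
    by (rule vec_space.rank_le_1_product_entries[OF Rc, where f="\<lambda>i. U0 v $$ (i,l)" and g="\<lambda>j. V0 v $$ (j,l)"])
       (auto simp: R_def)
  have sumR: "Av v = R 0 + R 1 + R 2"
  proof (rule eq_matI)
    fix i j assume "i < dim_row (R 0 + R 1 + R 2)" "j < dim_col (R 0 + R 1 + R 2)"
    hence i: "i < n" and j: "j < n" unfolding R_def by auto
    have "Av v $$ (i,j) = (\<Sum>l<3. U0 v $$ (i,l) * V0 v $$ (j,l))"
      using Av_UV UVt_idx[OF U0_carrier V0_carrier, of i v j] i j unfolding n_def by simp
    thus "Av v $$ (i,j) = (R 0 + R 1 + R 2) $$ (i,j)" using i j unfolding sum3 R_def by simp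
  qed (insert Ac, auto simp: R_def)
  have "vec_space.rank n (Av v) \<le> 3"
  proof -
    have "vec_space.rank n (R 0 + R 1 + R 2) \<le> vec_space.rank n (R 0 + R 1) + vec_space.rank n (R 2)"
      by (rule vec_space.rank_subadditive) (insert Rc, auto)
    moreover have "vec_space.rank n (R 0 + R 1) \<le> vec_space.rank n (R 0) + vec_space.rank n (R 1)"
      by (rule vec_space.rank_subadditive) (insert Rc, auto)
    ultimately show ?thesis using R1[of 0] R1[of 1] R1[of 2] sumR by simp
  qed
  moreover have "3 \<le> vec_space.rank n (Av v)"
  proof -
    have sub: "submatrix (Av v) {..<3} {..<3} = A1"
    proof (rule eq_matI)
      have c: "card {i. i < n \<and> i \<in> {..<3::nat}} = 3" 
      proof -
        have "{i. i < n \<and> i \<in> {..<3::nat}} = {..<3}" unfolding n_def by auto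
        thus ?thesis by simp
      qed
      show dr: "dim_row (submatrix (Av v) {..<3} {..<3}) = dim_row A1"
        using c A1_carrier Ac by (simp add: dim_submatrix)
      show dc: "dim_col (submatrix (Av v) {..<3} {..<3}) = dim_col A1"
        using c A1_carrier Ac by (simp add: dim_submatrix)
      fix i j assume i: "i < dim_row A1" and j: "j < dim_col A1"
      hence i3: "i < 3" and j3: "j < 3" using A1_carrier by auto
      have ci: "card {a\<in>{..<3::nat}. a < i} = i"
      proof -
        have "{a\<in>{..<3::nat}. a < i} = {..<i}" using i3 by auto
        thus ?thesis by simp
      qed
      have cj: "card {a\<in>{..<3::nat}. a < j} = j"
      proof -
        have "{a\<in>{..<3::nat}. a < j} = {..<j}" using j3 by auto
        thus ?thesis by simp
      qed
      have "submatrix (Av v) {..<3} {..<3} $$ (card {a\<in>{..<3::nat}. a < i}, card {a\<in>{..<3::nat}. a < j}) = Av v $$ (i,j)"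
        by (rule submatrix_index_card) (insert i3 j3 Ac, auto simp: n_def)
      thus "submatrix (Av v) {..<3} {..<3} $$ (i, j) = A1 $$ (i, j)"
        unfolding ci cj using Av_idx[of i v j] i3 j3 by simp
    qed
    have "card {j. j < n \<and> j \<in> {..<3::nat}} \<le> vec_space.rank n (Av v)"
      by (rule vec_space.rank_gt_minor[OF Ac, where I="{..<3}"]) (simp add: sub A1_det)
    moreover have "{j. j < n \<and> j \<in> {..<3::nat}} = {..<3}" unfolding n_def by auto
    ultimately show ?thesis by simp
  qed
  moreover have dr: "dim_row (Av v) = n" using Ac by simp
  ultimately show ?thesis unfolding mat_rank_def dr by linarith
qed
lemma arith_core:
  fixes \<beta> \<gamma> p q r c d e f :: real
  assumes pos: "\<beta> > 0" "\<gamma> > 0" and nn: "p \<ge> 0" "q \<ge> 0" "r \<ge> 0" "c \<ge> 0" "d \<ge> 0" "e \<ge> 0" "f \<ge> 0"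
    and H1: "\<beta> * c * \<gamma> = 1" and H2: "(q * c + r * d) * \<beta> = 1" and H3: "(p * c + r * e) * \<gamma> = 2"
    and H4: "2*p*q*c + 2*p*r*d + 2*q*r*e + r*r*f = 1" and H5: "p \<ge> \<beta>"
  shows False
proof -
  have S3: "p*q*c*\<beta>*\<gamma> = p*q" using H1 by (metis mult.commute mult.left_commute mult_1)
  have S1: "p*r*d*\<beta>*\<gamma> = p*\<gamma> - p*q"
  proof -
    have "p*\<gamma>*((q * c + r * d) * \<beta>) = p*\<gamma>" using H2 by simp
    moreover have "p*\<gamma>*((q * c + r * d) * \<beta>) = p*q*c*\<beta>*\<gamma> + p*r*d*\<beta>*\<gamma>" by (simp add: algebra_simps)
    ultimately show ?thesis using S3 by linarith
  qed
  have S2: "q*r*e*\<beta>*\<gamma> = 2*q*\<beta> - p*q"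
  proof -
    have "q*\<beta>*((p * c + r * e) * \<gamma>) = 2*q*\<beta>" using H3 by simp
    moreover have "q*\<beta>*((p * c + r * e) * \<gamma>) = p*q*c*\<beta>*\<gamma> + q*r*e*\<beta>*\<gamma>" by (simp add: algebra_simps)
    ultimately show ?thesis using S3 by linarith
  qed
  have "\<beta>*\<gamma> = \<beta>*\<gamma>*(2*p*q*c + 2*p*r*d + 2*q*r*e + r*r*f)" using H4 by simp
  also have "\<dots> = 2*(p*q*c*\<beta>*\<gamma>) + 2*(p*r*d*\<beta>*\<gamma>) + 2*(q*r*e*\<beta>*\<gamma>) + r*r*f*\<beta>*\<gamma>"
    by (simp add: algebra_simps)
  also have "\<dots> = 2*p*\<gamma> + 2*q*(2*\<beta> - p) + r*r*f*\<beta>*\<gamma>" unfolding S1 S2 S3 by (simp add: algebra_simps)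
  finally have E: "\<beta>*\<gamma> = 2*p*\<gamma> + 2*q*(2*\<beta> - p) + r*r*f*\<beta>*\<gamma>" .
  have H6: "p \<le> 2*\<beta>"
  proof -
    have "p*c*\<gamma> \<le> 2" using H3 nn pos by (smt (verit) mult_nonneg_nonneg distrib_right)
    hence "\<beta>*(p*c*\<gamma>) \<le> 2*\<beta>" using pos by (simp add: mult_left_mono mult.commute)
    moreover have "\<beta>*(p*c*\<gamma>) = p" using H1 by (metis mult.commute mult.left_commute mult_1)
    ultimately show ?thesis by simp
  qed
  have "2*q*(2*\<beta> - p) \<ge> 0" using nn H6 by simp
  moreover have "r*r*f*\<beta>*\<gamma> \<ge> 0" using nn pos by simp
  moreover have "2*p*\<gamma> \<ge> 2*\<beta>*\<gamma>" using H5 pos by simp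
  moreover have "\<beta>*\<gamma> > 0" using pos by simp
  ultimately show False using E by linarith
qed
definition Qf :: "(nat \<Rightarrow> nat \<Rightarrow> real) \<Rightarrow> (nat \<Rightarrow> real) \<Rightarrow> (nat \<Rightarrow> real) \<Rightarrow> real" where
  "Qf C x y = (\<Sum>p<3. \<Sum>q<3. x p * C p q * y q)"

lemma sum_ijl:
  assumes "i < 3" "j < 3" "l < 3" "i \<noteq> j" "i \<noteq> l" "j \<noteq> l"
  shows "(\<Sum>q<(3::nat). f q) = f i + f j + (f l :: real)"
proof -
  have "{..<3} = {i,j,l}" using assms by (auto simp: less3)
  thus ?thesis using assms by simp
qed

lemma Q_zero:
  assumes Cnn: "\<forall>p<3. \<forall>q<3. C p q \<ge> 0" and xnn: "\<forall>p<3. x p \<ge> 0" and Q: "Qf C x x = 0"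
    and p: "p < 3" "x p > 0" and q: "q < 3" "x q > 0"
  shows "C p q = 0"
proof -
  have tnn: "x p' * C p' q' * x q' \<ge> 0" if "p' < 3" "q' < 3" for p' q'
    using Cnn xnn that by simp
  have inn: "(\<Sum>q'<3. x p' * C p' q' * x q') \<ge> 0" if "p' < 3" for p'
    using tnn that by (intro sum_nonneg) auto
  have "(\<Sum>q'<3. x p * C p q' * x q') = 0"
    using Q inn p unfolding Qf_def by (subst (asm) sum_nonneg_eq_0_iff) auto
  hence "x p * C p q * x q = 0" using tnn p q by (subst (asm) sum_nonneg_eq_0_iff) auto
  thus ?thesis using p q by simp
qed

lemma Q_pos:
  assumes Cnn: "\<forall>p<3. \<forall>q<3. C p q \<ge> 0" and xnn: "\<forall>p<3. x p \<ge> 0" and ynn: "\<forall>p<3. y p \<ge> 0"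
    and Q: "Qf C x y > 0"
  shows "\<exists>p<3. \<exists>q<3. x p > 0 \<and> C p q > 0 \<and> y q > 0"
proof (rule ccontr)
  assume "\<not> ?thesis"
  hence "x p * C p q * y q = 0" if "p < 3" "q < 3" for p q
    using that Cnn xnn ynn by (metis less_eq_real_def mult_eq_0_iff)
  hence "Qf C x y = 0" unfolding Qf_def by (intro sum.neutral ballI) auto
  thus False using Q by simp
qed

lemma sum_pick:
  fixes i p :: nat
  assumes "i < 3" "p < 3" "i \<noteq> p"
  shows "(\<Sum>q<(3::nat). C m q * (if q = i then a else if q = p then b else 0)) = C m i * a + C m p * (b::real)"
  using assms unfolding sum3 by (auto simp: less3)

lemma kernel:
  fixes C :: "nat \<Rightarrow> nat \<Rightarrow> real" and i j p :: nat
  assumes Csym: "\<forall>p<3. \<forall>q<3. C p q = C q p"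
    and Cnd: "\<forall>x. (\<forall>m<3. (\<Sum>q<3. C m q * x q) = 0) \<longrightarrow> (\<forall>q<3. x q = (0::real))"
    and ijp: "i < 3" "j < 3" "p < 3" "i \<noteq> j" "i \<noteq> p" "j \<noteq> p"
    and z: "C i i = 0" "C i p = 0" "C p p = 0"
  shows False
proof -
  have m3: "m = i \<or> m = j \<or> m = p" if "m < 3" for m using that ijp by (auto simp: less3)
  define x where "x q = (if q = i then C p j else if q = p then - C i j else 0)" for q
  have "\<forall>m<3. (\<Sum>q<3. C m q * x q) = 0"
  proof (intro allI impI)
    fix m :: nat assume m: "m < 3"
    have "(\<Sum>q<3. C m q * x q) = C m i * C p j + C m p * (- C i j)"
      unfolding x_def using sum_pick[OF ijp(1) ijp(3) ijp(5)] .
    also have "\<dots> = 0" using m3[OF m] Csym ijp z by auto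
    finally show "(\<Sum>q<3. C m q * x q) = 0" .
  qed
  hence x0: "\<forall>q<3. x q = 0" using Cnd by blast
  hence "C i j = 0" using x0 ijp unfolding x_def by (metis neg_equal_0_iff_equal)
  define y where "y q = (if q = i then 1 else if q = p then 0 else (0::real))" for q
  have "\<forall>m<3. (\<Sum>q<3. C m q * y q) = 0"
  proof (intro allI impI)
    fix m :: nat assume m: "m < 3"
    have "(\<Sum>q<3. C m q * y q) = C m i * 1 + C m p * 0"
      unfolding y_def using sum_pick[OF ijp(1) ijp(3) ijp(5)] .
    also have "\<dots> = 0" using m3[OF m] Csym ijp z \<open>C i j = 0\<close> by auto
    finally show "(\<Sum>q<3. C m q * y q) = 0" .
  qed
  hence "\<forall>q<3. y q = 0" using Cnd by blast
  thus False using ijp unfolding y_def by auto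
qed
lemma Q_lin: "(\<Sum>p<3. x p * (\<Sum>q<3. C p q * (b1 q - b2 q + b3 q - b4 q))) = Qf C x b1 - Qf C x b2 + Qf C x b3 - Qf C x b4"
  unfolding Qf_def by (simp add: sum_distrib_left sum_subtractf sum.distrib algebra_simps)
lemma core:
  fixes C :: "nat \<Rightarrow> nat \<Rightarrow> real" and b1 b2 b3 b4 :: "nat \<Rightarrow> real"
  assumes Cnn: "\<forall>p<3. \<forall>q<3. C p q \<ge> 0" and Csym: "\<forall>p<3. \<forall>q<3. C p q = C q p"
    and b1nn: "\<forall>p<3. b1 p \<ge> 0" and b2nn: "\<forall>p<3. b2 p \<ge> 0" and b3nn: "\<forall>p<3. b3 p \<ge> 0"
    and b4nn: "\<forall>p<3. b4 p \<ge> 0"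
    and Cnd: "\<forall>x. (\<forall>m<3. (\<Sum>q<3. C m q * x q) = 0) \<longrightarrow> (\<forall>q<3. x q = 0)"
    and Bnd: "\<forall>y. (\<Sum>p<3. b1 p * y p) = 0 \<longrightarrow> (\<Sum>p<3. b2 p * y p) = 0 \<longrightarrow> (\<Sum>p<3. b3 p * y p) = 0
               \<longrightarrow> (\<forall>p<3. y p = 0)"
    and Q11: "Qf C b1 b1 = 1" and Q12: "Qf C b1 b2 = 1" and Q13: "Qf C b1 b3 = 2"
    and Q21: "Qf C b2 b1 = 1" and Q22: "Qf C b2 b2 = 0" and Q23: "Qf C b2 b3 = 1"
    and Q31: "Qf C b3 b1 = 2" and Q32: "Qf C b3 b2 = 1" and Q33: "Qf C b3 b3 = 0"
    and Q14: "Qf C b1 b4 = 2" and Q24: "Qf C b2 b4 = 2" and Q34: "Qf C b3 b4 = 1"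
  shows False
proof -
  define d where "d q = b1 q - b2 q + b3 q - b4 q" for q
  define y where "y p = (\<Sum>q<3. C p q * d q)" for p
  have lin: "(\<Sum>p<3. x p * y p) = Qf C x b1 - Qf C x b2 + Qf C x b3 - Qf C x b4" for x
    unfolding y_def d_def by (rule Q_lin)
  have e1: "(\<Sum>p<3. b1 p * y p) = 0" unfolding lin Q11 Q12 Q13 Q14 by simp
  have e2: "(\<Sum>p<3. b2 p * y p) = 0" unfolding lin Q21 Q22 Q23 Q24 by simp
  have e3: "(\<Sum>p<3. b3 p * y p) = 0" unfolding lin Q31 Q32 Q33 Q34 by simp
  have "\<forall>p<3. y p = 0" using Bnd e1 e2 e3 by blast
  hence "\<forall>q<3. d q = 0" using Cnd unfolding y_def by blast
  hence b4eq: "b4 q = b1 q - b2 q + b3 q" if "q < 3" for q using that unfolding d_def by auto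
  have "\<exists>p<3. \<exists>q<3. b2 p > 0 \<and> C p q > 0 \<and> b3 q > 0" by (rule Q_pos[OF Cnn b2nn b3nn]) (simp add: Q23)
  then obtain i j where ij: "i < 3" "j < 3" "b2 i > 0" "C i j > 0" "b3 j > 0" by blast
  have Cii: "C i i = 0" using Q_zero[OF Cnn b2nn Q22] ij by auto
  have Cjj: "C j j = 0" using Q_zero[OF Cnn b3nn Q33] ij by auto
  have ineqj: "i \<noteq> j" using Cii ij by auto
  define l where "l = 3 - i - j"
  have l: "l < 3" "l \<noteq> i" "l \<noteq> j" using ij ineqj unfolding l_def by (auto simp: less3)
  have b2j: "b2 j = 0"
  proof (rule ccontr)
    assume "b2 j \<noteq> 0" hence "b2 j > 0" using b2nn ij by (simp add: less_le)
    hence "C i j = 0" using Q_zero[OF Cnn b2nn Q22] ij by auto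
    thus False using ij by simp
  qed
  have b3i: "b3 i = 0"
  proof (rule ccontr)
    assume "b3 i \<noteq> 0" hence "b3 i > 0" using b3nn ij by (simp add: less_le)
    hence "C i j = 0" using Q_zero[OF Cnn b3nn Q33] ij by auto
    thus False using ij by simp
  qed
  have b2l: "b2 l = 0"
  proof (rule ccontr)
    assume "b2 l \<noteq> 0" hence "b2 l > 0" using b2nn l by (simp add: less_le)
    hence "C i l = 0" "C l l = 0" using Q_zero[OF Cnn b2nn Q22] ij l by auto
    thus False using kernel[OF Csym Cnd ij(1) ij(2) l(1) ineqj l(2)[symmetric] l(3)[symmetric] Cii] by simp
  qed
  have b3l: "b3 l = 0"
  proof (rule ccontr)
    assume "b3 l \<noteq> 0" hence "b3 l > 0" using b3nn l by (simp add: less_le)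
    hence "C j l = 0" "C l l = 0" using Q_zero[OF Cnn b3nn Q33] ij l by auto
    thus False using kernel[OF Csym Cnd ij(2) ij(1) l(1) ineqj[symmetric] l(3)[symmetric] l(2)[symmetric] Cjj] by simp
  qed
  note S = sum_ijl[OF ij(1) ij(2) l(1) ineqj l(2)[symmetric] l(3)[symmetric]]
  have sym: "C j i = C i j" "C l i = C i l" "C l j = C j l" using Csym ij l by auto
  show False
  proof (rule arith_core[of "b2 i" "b3 j" "b1 i" "b1 j" "b1 l" "C i j" "C i l" "C j l" "C l l"])
    show "b2 i > 0" "b3 j > 0" using ij by auto
    show "b1 i \<ge> 0" "b1 j \<ge> 0" "b1 l \<ge> 0" using b1nn ij l by auto
    show "C i j \<ge> 0" "C i l \<ge> 0" "C j l \<ge> 0" "C l l \<ge> 0" using Cnn ij l by auto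
    show "b2 i * C i j * b3 j = 1" using Q23 unfolding Qf_def S by (simp add: b2j b2l b3i b3l)
    show "(b1 j * C i j + b1 l * C i l) * b2 i = 1" using Q12 unfolding Qf_def S
      by (simp add: b2j b2l Cii sym algebra_simps)
    show "(b1 i * C i j + b1 l * C j l) * b3 j = 2" using Q13 unfolding Qf_def S
      by (simp add: b3i b3l Cjj sym algebra_simps)
    show "2 * b1 i * b1 j * C i j + 2 * b1 i * b1 l * C i l + 2 * b1 j * b1 l * C j l + b1 l * b1 l * C l l = 1"
      using Q11 unfolding Qf_def S by (simp add: Cii Cjj sym algebra_simps)
    show "b1 i \<ge> b2 i" using b4eq[OF ij(1)] b4nn ij(1) b3i by auto
  qed
qed
lemma nondeg:
  assumes M: "M \<in> carrier_mat 3 3" and d: "det M \<noteq> (0::real)"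
  shows "\<forall>x. (\<forall>m<3. (\<Sum>q<3. M $$ (m,q) * x q) = 0) \<longrightarrow> (\<forall>q<3. x q = 0)"
proof (rule allI, rule impI)
  fix x :: "nat \<Rightarrow> real" assume h: "\<forall>m<3. (\<Sum>q<3. M $$ (m,q) * x q) = 0"
  have "M *\<^sub>v vec 3 x = 0\<^sub>v 3"
  proof (rule eq_vecI)
    fix m assume "m < dim_vec (0\<^sub>v 3 :: real vec)"
    hence m: "m < 3" by simp
    have "(M *\<^sub>v vec 3 x) $ m = (\<Sum>q<3. M $$ (m,q) * x q)"
      using M m by (simp add: scalar_prod_def atLeast0LessThan)
    thus "(M *\<^sub>v vec 3 x) $ m = (0\<^sub>v 3 :: real vec) $ m" using h m by simp
  qed (insert M, auto)
  hence "vec 3 x = 0\<^sub>v 3" using det_0_iff_vec_prod_zero_field[OF M] d vec_carrier[of 3 x] by blast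
  thus "\<forall>q<3. x q = 0" by (metis index_vec index_zero_vec(1))
qed

lemma scale_Q: "Qf C x (\<lambda>q. y q / c) = Qf C x y / c"
  unfolding Qf_def by (simp add: sum_divide_distrib)
lemma no_snt3:
  assumes B: "B \<in> carrier_mat (3 + dim_vec v) 3" and C: "C \<in> carrier_mat 3 3"
    and Cs: "transpose_mat C = C" and Bnn: "nonneg_mat B" and Cnn: "nonneg_mat C"
    and A: "Av v = B * C * transpose_mat B"
    and vnn: "\<forall>i<dim_vec v. v $ i \<ge> 0" and vv: "v \<bullet> v = 1"
  shows False
proof -
  define n where "n = 3 + dim_vec v"
  define Cf where "Cf p q = C $$ (p,q)" for p q
  define b where "b i p = B $$ (i,p)" for i p
  have Aij: "Av v $$ (i,j) = Qf Cf (b i) (b j)" if "i < n" "j < n" for i j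
    using A BCBt_idx[OF B C, of i j] that unfolding Qf_def Cf_def b_def n_def by simp
  obtain t where t: "t < dim_vec v" "v $ t > 0"
  proof -
    have "\<exists>t<dim_vec v. v $ t > 0"
    proof (rule ccontr)
      assume "\<not> ?thesis"
      hence "v $ t = 0" if "t < dim_vec v" for t using vnn that by (metis less_eq_real_def)
      hence "v \<bullet> v = 0" by (simp add: scalar_prod_def)
      thus False using vv by simp
    qed
    thus ?thesis using that by blast
  qed
  define b4 where "b4 p = b (3 + t) p / v $ t" for p
  have tn: "3 + t < n" using t unfolding n_def by simp
  have Q4: "Qf Cf (b i) b4 = avec $ i" if "i < 3" for i
  proof -
    have "Qf Cf (b i) b4 = Qf Cf (b i) (b (3+t)) / v $ t" unfolding b4_def by (rule scale_Q)
    also have "\<dots> = Av v $$ (i, 3+t) / v $ t" using Aij[of i "3+t"] that tn by simp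
    also have "\<dots> = avec $ i" using Av_idx[of i v "3+t"] that t by simp
    finally show ?thesis .
  qed
  have Q3: "Qf Cf (b i) (b j) = A1 $$ (i,j)" if "i < 3" "j < 3" for i j
    using Aij[of i j] Av_idx[of i v j] that unfolding n_def by simp
  have nnC: "\<forall>p<3. \<forall>q<3. Cf p q \<ge> 0" using Cnn C unfolding nonneg_mat_def Cf_def by auto
  have symC: "\<forall>p<3. \<forall>q<3. Cf p q = Cf q p"
  proof (intro allI impI)
    fix p q :: nat assume "p < 3" "q < 3"
    hence "transpose_mat C $$ (q,p) = C $$ (p,q)" using C by simp
    thus "Cf p q = Cf q p" using Cs unfolding Cf_def by simp
  qed
  have bnn: "b i p \<ge> 0" if "i < n" "p < 3" for i p using Bnn B that unfolding nonneg_mat_def b_def n_def by auto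
  have b4nn: "\<forall>p<3. b4 p \<ge> 0" using bnn[OF tn] t unfolding b4_def by simp
  define B1 where "B1 = mat 3 3 (\<lambda>(i,p). B $$ (i,p))"
  have B1c: "B1 \<in> carrier_mat 3 3" unfolding B1_def by simp
  have "A1 = B1 * C * transpose_mat B1"
  proof (rule eq_matI)
    fix i j assume "i < dim_row (B1 * C * transpose_mat B1)" "j < dim_col (B1 * C * transpose_mat B1)"
    hence i: "i < 3" and j: "j < 3" using B1c by auto
    have "(B1 * C * transpose_mat B1) $$ (i,j) = Qf Cf (b i) (b j)"
      using BCBt_idx[OF B1c C i j] i j unfolding Qf_def Cf_def b_def B1_def by simp
    thus "A1 $$ (i,j) = (B1 * C * transpose_mat B1) $$ (i,j)" using Q3 i j by simp
  qed (insert A1_carrier B1c C, auto)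
  hence "det A1 = det B1 * det C * det (transpose_mat B1)"
    using det_mult[of "B1 * C" 3 "transpose_mat B1"] det_mult[OF B1c C] B1c C by simp
  hence dB: "det B1 \<noteq> 0" and dC: "det C \<noteq> 0" using A1_det by auto
  have Cnd: "\<forall>x. (\<forall>m<3. (\<Sum>q<3. Cf m q * x q) = 0) \<longrightarrow> (\<forall>q<3. x q = 0)"
    using nondeg[OF C dC] unfolding Cf_def .
  have Bnd0: "\<forall>x. (\<forall>m<3. (\<Sum>q<3. B1 $$ (m,q) * x q) = 0) \<longrightarrow> (\<forall>q<3. x q = 0)"
    using nondeg[OF B1c dB] .
  have Bnd: "\<forall>y. (\<Sum>p<3. b 0 p * y p) = 0 \<longrightarrow> (\<Sum>p<3. b 1 p * y p) = 0 \<longrightarrow> (\<Sum>p<3. b 2 p * y p) = 0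
               \<longrightarrow> (\<forall>p<3. y p = 0)"
  proof (intro allI impI)
    fix y :: "nat \<Rightarrow> real" and p :: nat
    assume h: "(\<Sum>p<3. b 0 p * y p) = 0" "(\<Sum>p<3. b 1 p * y p) = 0" "(\<Sum>p<3. b 2 p * y p) = 0" "p < 3"
    have "\<forall>m<3. (\<Sum>q<3. B1 $$ (m,q) * y q) = 0"
    proof (intro allI impI)
      fix m :: nat assume m: "m < 3"
      have "(\<Sum>q<3. B1 $$ (m,q) * y q) = (\<Sum>q<3. b m q * y q)"
        using m unfolding B1_def b_def by (intro sum.cong) auto
      thus "(\<Sum>q<3. B1 $$ (m,q) * y q) = 0" using h m by (auto simp: less3)
    qed
    thus "y p = 0" using Bnd0 h(4) by blast
  qed
  have n3: "0 < n" "1 < n" "2 < n" unfolding n_def by auto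
  show False
  proof (rule core[OF nnC symC _ _ _ b4nn Cnd Bnd])
    show "\<forall>p<3. b 0 p \<ge> 0" "\<forall>p<3. b 1 p \<ge> 0" "\<forall>p<3. b 2 p \<ge> 0" using bnn n3 by auto
  qed (simp_all add: Q3 Q4 A1_idx avec_idx)
qed
lemma sum4: "(\<Sum>l<(4::nat). f l) = f 0 + f 1 + f 2 + (f 3::real)"
  by (simp add: eval_nat_numeral)

definition B0 :: "real vec \<Rightarrow> real mat" where
  "B0 v = mat (3 + dim_vec v) 4 (\<lambda>(i,l). if i < 3 then (if l = i then 1 else 0) else (if l = 3 then v $ (i-3) else 0))"
definition C0 :: "real mat" where
  "C0 = mat 4 4 (\<lambda>(p,q). [[1,1,2,2],[1,0,1,2],[2,1,0,1],[2,2,1,(1::real)]] ! p ! q)"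

lemma B0_carrier: "B0 v \<in> carrier_mat (3 + dim_vec v) 4" unfolding B0_def by auto
lemma C0_carrier: "C0 \<in> carrier_mat 4 4" unfolding C0_def by auto
lemma less4: "(i::nat) < 4 \<longleftrightarrow> i = 0 \<or> i = 1 \<or> i = 2 \<or> i = 3" by auto

lemma Av_BCB: "Av v = B0 v * C0 * transpose_mat (B0 v)"
proof (rule eq_matI)
  fix i j assume "i < dim_row (B0 v * C0 * transpose_mat (B0 v))" "j < dim_col (B0 v * C0 * transpose_mat (B0 v))"
  hence i': "i < 3 + dim_vec v" and j': "j < 3 + dim_vec v" unfolding B0_def by auto
  have "(B0 v * C0 * transpose_mat (B0 v)) $$ (i,j) = (\<Sum>p<4. \<Sum>q<4. B0 v $$ (i,p) * C0 $$ (p,q) * B0 v $$ (j,q))"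
    by (rule BCBt_idx[OF B0_carrier C0_carrier i' j'])
  also have "\<dots> = Av v $$ (i,j)"
    unfolding sum4 Av_idx[OF i' j'] using i' j'
    by (cases "i < 3"; cases "j < 3") (auto simp: B0_def C0_def less3 A1_idx avec_idx)
  finally show "Av v $$ (i,j) = (B0 v * C0 * transpose_mat (B0 v)) $$ (i,j)" by simp
qed (auto simp: Av_dims B0_def)

lemma C0_sym: "transpose_mat C0 = C0"
  by (rule eq_matI) (auto simp: C0_def less4)
lemma C0_nn: "nonneg_mat C0" unfolding nonneg_mat_def C0_def by (auto simp: less4)
lemma B0_nn: "\<forall>i<dim_vec v. v $ i \<ge> 0 \<Longrightarrow> nonneg_mat (B0 v)"
  unfolding nonneg_mat_def B0_def by auto
theorem mainTheorem8:
  fixes v :: "real vec" and k :: nat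
  assumes "k \<ge> 1" and "dim_vec v = k"
    and "\<forall>i<k. v $ i \<ge> 0"
    and "v \<bullet> v = 1"
  shows "mat_rank (Av v) = 3 \<and> nonneg_rank (Av v) = 3 \<and> snt_rank (Av v) = 4"
proof (intro conjI)
  have vnn: "\<forall>i<dim_vec v. v $ i \<ge> 0" using assms by simp
  have dr: "dim_row (Av v) = 3 + dim_vec v" by (rule Av_dims)
  show "mat_rank (Av v) = 3" by (rule rank_Av)
  show "nonneg_rank (Av v) = 3"
    unfolding nonneg_rank_def dr
  proof (rule Least_equality)
    show "\<exists>U V. U \<in> carrier_mat (3 + dim_vec v) 3 \<and> V \<in> carrier_mat (3 + dim_vec v) 3 \<and>
      nonneg_mat U \<and> nonneg_mat V \<and> Av v = U * transpose_mat V"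
      using U0_carrier V0_carrier U0_nonneg[OF vnn] V0_nonneg[OF vnn] Av_UV by blast
  next
    fix y assume "\<exists>U V. U \<in> carrier_mat (3 + dim_vec v) y \<and> V \<in> carrier_mat (3 + dim_vec v) y \<and>
      nonneg_mat U \<and> nonneg_mat V \<and> Av v = U * transpose_mat V"
    then obtain U V where UV: "U \<in> carrier_mat (3 + dim_vec v) y" "V \<in> carrier_mat (3 + dim_vec v) y"
      "Av v = U * transpose_mat V" by blast
    show "3 \<le> y"
    proof (rule ccontr)
      assume "\<not> 3 \<le> y"
      thus False using no_small[OF UV(1) UV(2) _ UV(3)] by simp
    qed
  qed
  show "snt_rank (Av v) = 4"
    unfolding snt_rank_def dr
  proof (rule Least_equality)
    show "\<exists>B C. B \<in> carrier_mat (3 + dim_vec v) 4 \<and> C \<in> carrier_mat 4 4 \<and> transpose_mat C = C \<and>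
      nonneg_mat B \<and> nonneg_mat C \<and> Av v = B * C * transpose_mat B"
      using B0_carrier C0_carrier C0_sym B0_nn[OF vnn] C0_nn Av_BCB by blast
  next
    fix y assume "\<exists>B C. B \<in> carrier_mat (3 + dim_vec v) y \<and> C \<in> carrier_mat y y \<and> transpose_mat C = C \<and>
      nonneg_mat B \<and> nonneg_mat C \<and> Av v = B * C * transpose_mat B"
    then obtain B C where BC: "B \<in> carrier_mat (3 + dim_vec v) y" "C \<in> carrier_mat y y" "transpose_mat C = C"
      "nonneg_mat B" "nonneg_mat C" "Av v = B * C * transpose_mat B" by blast
    show "4 \<le> y"
    proof (rule ccontr)
      assume "\<not> 4 \<le> y"
      hence "y < 3 \<or> y = 3" by auto
      thus False
      proof
        assume y: "y < 3"
        have BCc: "B * C \<in> carrier_mat (3 + dim_vec v) y" using BC by simp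
        have "transpose_mat (B * C) = C * transpose_mat B"
          using transpose_mult[OF BC(1) BC(2)] BC(3) by simp
        hence "B * transpose_mat (B * C) = B * C * transpose_mat B"
          using assoc_mult_mat[OF BC(1) BC(2), of "transpose_mat B"] BC(1) by simp
        thus False using no_small[OF BC(1) BCc y, of v] BC(6) by simp
      next
        assume "y = 3"
        thus False using no_snt3[of B v C] BC vnn assms(4) by simp
      qed
    qed
  qed
qed
end
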